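(* Let $R$ be a 2-primal ring (for instance a reduced, commutative, left duo, symmetric, reversible, IFP, PSI or semi-symmetric ring) and $M$ a projective left $R$-module. Then $\mathcal N_s(M)=\langle E_M(0)\rangle=\beta_{co}(M)=\beta(M)$. In particular the zero submodule of $M$ satisfies both the complete radical formula and the radical formula.
   Context: Rings are associative with identity; modules are unital left modules. A ring is 2-primal if its set of nilpotent elements equals its prime radical; the listed ring classes are all contained in the class of 2-primal rings. A submodule $P$ of $M$ is prime if $RM\not\subseteq P$ and for every ideal $A$ and submodule $K$ with $AK\subseteq P$, $K\subseteq P$ or $AM\subseteq P$; completely prime if $RM\not\subseteq P$ and $rm\in P$ implies $m\in P$ or $rM\subseteq P$. $\beta(M)$ (resp. $\beta_{co}(M)$) is the intersection of all prime (resp. completely prime) submodules ($=M$ if none). $E_M(0)=\{rm: r^km=0\text{ for some }k\in\mathbb N\}$, $\langle E_M(0)\rangle$ the submodule generated. A submodule $N$ satisfies the radical formula (resp. complete radical formula) if the submodule generated by $E_M(N)=\{rm: r^km\in N\text{ for some }k\}$ equals the intersection of all prime (resp. completely prime) submodules containing $N$. $\mathcal N_s(M)$ is the set of strongly nilpotent elements: $m=\sum_{i=1}^r a_im_i$ such that for each $i$ and every sequence $a_{i1}=a_i$, $a_{i,n+1}\in a_{in}Ra_{in}$, some $a_{ik}Rm_i=0$. *)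

theory Defs
  imports Main
begin

definition ring_ideal :: "'r::ring_1 set \<Rightarrow> bool" where
  "ring_ideal A \<longleftrightarrow> 0 \<in> A \<and> (\<forall>a\<in>A. \<forall>b\<in>A. a + b \<in> A) \<and> (\<forall>a\<in>A. - a \<in> A)
     \<and> (\<forall>a\<in>A. \<forall>r. r * a \<in> A \<and> a * r \<in> A)"

definition prime_ideal :: "'r::ring_1 set \<Rightarrow> bool" where
  "prime_ideal P \<longleftrightarrow> ring_ideal P \<and> P \<noteq> UNIV \<and>
     (\<forall>A B. ring_ideal A \<longrightarrow> ring_ideal B \<longrightarrow> (\<forall>a\<in>A. \<forall>b\<in>B. a * b \<in> P)
        \<longrightarrow> A \<subseteq> P \<or> B \<subseteq> P)"

definition prime_radical :: "'r::ring_1 set" where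
  "prime_radical = \<Inter> {P. prime_ideal P}"

definition nilpotent_elems :: "'r::ring_1 set" where
  "nilpotent_elems = {x. \<exists>n. x ^ n = 0}"

definition two_primal :: "'r::ring_1 itself \<Rightarrow> bool" where
  "two_primal _ \<longleftrightarrow> (nilpotent_elems :: 'r set) = prime_radical"

record ('r, 'm) lmodule =
  carrier :: "'m set"
  add :: "'m \<Rightarrow> 'm \<Rightarrow> 'm"
  zero :: 'm
  smult :: "'r \<Rightarrow> 'm \<Rightarrow> 'm"

definition is_lmodule :: "('r::ring_1, 'm) lmodule \<Rightarrow> bool" where
  "is_lmodule M \<longleftrightarrow>
     zero M \<in> carrier M \<and>
     (\<forall>x\<in>carrier M. \<forall>y\<in>carrier M. add M x y \<in> carrier M) \<and>
     (\<forall>x\<in>carrier M. \<forall>y\<in>carrier M. \<forall>z\<in>carrier M. add M (add M x y) z = add M x (add M y z)) \<and>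
     (\<forall>x\<in>carrier M. \<forall>y\<in>carrier M. add M x y = add M y x) \<and>
     (\<forall>x\<in>carrier M. add M (zero M) x = x) \<and>
     (\<forall>x\<in>carrier M. \<exists>y\<in>carrier M. add M x y = zero M) \<and>
     (\<forall>r. \<forall>x\<in>carrier M. smult M r x \<in> carrier M) \<and>
     (\<forall>r. \<forall>x\<in>carrier M. \<forall>y\<in>carrier M. smult M r (add M x y) = add M (smult M r x) (smult M r y)) \<and>
     (\<forall>r s. \<forall>x\<in>carrier M. smult M (r + s) x = add M (smult M r x) (smult M s x)) \<and>
     (\<forall>r s. \<forall>x\<in>carrier M. smult M (r * s) x = smult M r (smult M s x)) \<and>
     (\<forall>x\<in>carrier M. smult M 1 x = x)"

definition submodule :: "('r::ring_1, 'm) lmodule \<Rightarrow> 'm set \<Rightarrow> bool" where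
  "submodule M N \<longleftrightarrow> N \<subseteq> carrier M \<and> zero M \<in> N \<and>
     (\<forall>x\<in>N. \<forall>y\<in>N. add M x y \<in> N) \<and> (\<forall>r. \<forall>x\<in>N. smult M r x \<in> N)"

definition gen_submodule :: "('r::ring_1, 'm) lmodule \<Rightarrow> 'm set \<Rightarrow> 'm set" where
  "gen_submodule M S = \<Inter> {N. submodule M N \<and> S \<subseteq> N}"

definition module_hom :: "('r::ring_1, 'm) lmodule \<Rightarrow> ('r, 'n) lmodule \<Rightarrow> ('m \<Rightarrow> 'n) \<Rightarrow> bool" where
  "module_hom M N f \<longleftrightarrow> (\<forall>x\<in>carrier M. f x \<in> carrier N) \<and>
     (\<forall>x\<in>carrier M. \<forall>y\<in>carrier M. f (add M x y) = add N (f x) (f y)) \<and>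
     (\<forall>r. \<forall>x\<in>carrier M. f (smult M r x) = smult N r (f x))"

text \<open>Since HOL cannot
quantify over types inside a formula, the test modules N, P are taken with carriers in
the type 'm => 'r, which contains (a copy of) the free module on the elements of M;
this suffices (and is necessary) for projectivity in the usual sense.\<close>
definition projective :: "('r::ring_1, 'm) lmodule \<Rightarrow> bool" where
  "projective M \<longleftrightarrow> is_lmodule M \<and>
     (\<forall>(N :: ('r, 'm \<Rightarrow> 'r) lmodule) (P :: ('r, 'm \<Rightarrow> 'r) lmodule) g f.
        is_lmodule N \<longrightarrow> is_lmodule P \<longrightarrow> module_hom N P g \<longrightarrow> g ` carrier N = carrier P \<longrightarrow>
        module_hom M P f \<longrightarrow>
        (\<exists>h. module_hom M N h \<and> (\<forall>x\<in>carrier M. g (h x) = f x)))"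

definition prime_submodule :: "('r::ring_1, 'm) lmodule \<Rightarrow> 'm set \<Rightarrow> bool" where
  "prime_submodule M P \<longleftrightarrow> submodule M P \<and>
     \<not> (\<forall>r. \<forall>m\<in>carrier M. smult M r m \<in> P) \<and>
     (\<forall>A K. ring_ideal A \<longrightarrow> submodule M K \<longrightarrow> (\<forall>a\<in>A. \<forall>k\<in>K. smult M a k \<in> P) \<longrightarrow>
        K \<subseteq> P \<or> (\<forall>a\<in>A. \<forall>m\<in>carrier M. smult M a m \<in> P))"

definition completely_prime_submodule :: "('r::ring_1, 'm) lmodule \<Rightarrow> 'm set \<Rightarrow> bool" where
  "completely_prime_submodule M P \<longleftrightarrow> submodule M P \<and>
     \<not> (\<forall>r. \<forall>m\<in>carrier M. smult M r m \<in> P) \<and>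
     (\<forall>r. \<forall>m\<in>carrier M. smult M r m \<in> P \<longrightarrow>
        m \<in> P \<or> (\<forall>m'\<in>carrier M. smult M r m' \<in> P))"

definition prime_hull :: "('r::ring_1, 'm) lmodule \<Rightarrow> 'm set \<Rightarrow> 'm set" where
  "prime_hull M N = (if {P. prime_submodule M P \<and> N \<subseteq> P} = {} then carrier M
     else \<Inter> {P. prime_submodule M P \<and> N \<subseteq> P})"

definition co_prime_hull :: "('r::ring_1, 'm) lmodule \<Rightarrow> 'm set \<Rightarrow> 'm set" where
  "co_prime_hull M N = (if {P. completely_prime_submodule M P \<and> N \<subseteq> P} = {} then carrier M
     else \<Inter> {P. completely_prime_submodule M P \<and> N \<subseteq> P})"

definition beta :: "('r::ring_1, 'm) lmodule \<Rightarrow> 'm set" where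
  "beta M = (if {P. prime_submodule M P} = {} then carrier M else \<Inter> {P. prime_submodule M P})"

definition beta_co :: "('r::ring_1, 'm) lmodule \<Rightarrow> 'm set" where
  "beta_co M = (if {P. completely_prime_submodule M P} = {} then carrier M
     else \<Inter> {P. completely_prime_submodule M P})"

definition E_M :: "('r::ring_1, 'm) lmodule \<Rightarrow> 'm set \<Rightarrow> 'm set" where
  "E_M M N = {smult M r m | r m. m \<in> carrier M \<and> (\<exists>k::nat. smult M (r ^ k) m \<in> N)}"

definition radical_formula :: "('r::ring_1, 'm) lmodule \<Rightarrow> 'm set \<Rightarrow> bool" where
  "radical_formula M N \<longleftrightarrow> gen_submodule M (E_M M N) = prime_hull M N"

definition complete_radical_formula :: "('r::ring_1, 'm) lmodule \<Rightarrow> 'm set \<Rightarrow> bool" where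
  "complete_radical_formula M N \<longleftrightarrow> gen_submodule M (E_M M N) = co_prime_hull M N"

definition msum :: "('r, 'm) lmodule \<Rightarrow> 'm list \<Rightarrow> 'm" where
  "msum M xs = foldr (add M) xs (zero M)"

definition strongly_nilpotent_elems :: "('r::ring_1, 'm) lmodule \<Rightarrow> 'm set" where
  "strongly_nilpotent_elems M =
     {x. \<exists>ps :: ('r \<times> 'm) list.
        (\<forall>(a, m) \<in> set ps. m \<in> carrier M) \<and>
        x = msum M (map (\<lambda>(a, m). smult M a m) ps) \<and>
        (\<forall>(a, m) \<in> set ps. \<forall>s :: nat \<Rightarrow> 'r.
           s 0 = a \<longrightarrow> (\<forall>n. \<exists>t. s (Suc n) = s n * t * s n) \<longrightarrow>
           (\<exists>k. \<forall>t. smult M (s k * t) m = zero M))}"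

end

theory Submission
  imports Defs
begin

lemma ideal_Inter: "(\<And>P. P \<in> F \<Longrightarrow> ring_ideal P) \<Longrightarrow> ring_ideal (\<Inter> F)"
  unfolding ring_ideal_def by blast

lemma ideal_zero: "ring_ideal X \<Longrightarrow> 0 \<in> X" by (simp add: ring_ideal_def)
lemma ideal_add: "ring_ideal X \<Longrightarrow> x \<in> X \<Longrightarrow> y \<in> X \<Longrightarrow> x + y \<in> X" by (simp add: ring_ideal_def)
lemma ideal_neg: "ring_ideal X \<Longrightarrow> x \<in> X \<Longrightarrow> - x \<in> X" by (simp add: ring_ideal_def)
lemma ideal_lmult: "ring_ideal X \<Longrightarrow> x \<in> X \<Longrightarrow> r * x \<in> X" by (simp add: ring_ideal_def)
lemma ideal_rmult: "ring_ideal X \<Longrightarrow> x \<in> X \<Longrightarrow> x * r \<in> X" by (simp add: ring_ideal_def)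

lemma chain_union_ideal:
  assumes "C \<noteq> {}" "\<forall>X\<in>C. ring_ideal X" "\<forall>X\<in>C. \<forall>Y\<in>C. X \<subseteq> Y \<or> Y \<subseteq> X"
  shows "ring_ideal (\<Union>C)"
proof -
  have z: "0 \<in> \<Union>C" using assms(1,2) ideal_zero by blast
  have a: "x + y \<in> \<Union>C" if h: "x \<in> \<Union>C" "y \<in> \<Union>C" for x y
  proof -
    obtain X Y where XY: "X \<in> C" "Y \<in> C" "x \<in> X" "y \<in> Y" using h by blast
    show ?thesis
    proof (cases "X \<subseteq> Y")
      case True then have "x + y \<in> Y" using XY assms(2) ideal_add by blast
      then show ?thesis using XY by blast
    next
      case False then have "Y \<subseteq> X" using XY assms(3) by blast
      then have "x + y \<in> X" using XY assms(2) ideal_add by blast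
      then show ?thesis using XY by blast
    qed
  qed
  have n: "- x \<in> \<Union>C" if "x \<in> \<Union>C" for x using that assms(2) ideal_neg by blast
  have m: "r * x \<in> \<Union>C \<and> x * r \<in> \<Union>C" if "x \<in> \<Union>C" for x r
    using that assms(2) ideal_lmult ideal_rmult by blast
  show ?thesis unfolding ring_ideal_def using z a n m by blast
qed

lemma nil_ideal:
  assumes "two_primal TYPE('r::ring_1)"
  shows "ring_ideal (nilpotent_elems :: 'r set)"
proof -
  have "nilpotent_elems = (prime_radical :: 'r set)" using assms by (simp add: two_primal_def)
  moreover have "ring_ideal (prime_radical :: 'r set)"
    unfolding prime_radical_def by (rule ideal_Inter) (simp add: prime_ideal_def)
  ultimately show ?thesis by simp
qed

lemma nil_semiprime:
  fixes a :: "'r::ring_1"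
  assumes "a * a \<in> nilpotent_elems" shows "a \<in> nilpotent_elems"
proof -
  obtain n where "(a*a)^n = 0" using assms by (auto simp: nilpotent_elems_def)
  then have "a^(2*n) = 0" by (simp add: power_mult power2_eq_square)
  then show ?thesis by (auto simp: nilpotent_elems_def)
qed

lemma csp_comm:
  fixes Q :: "'r::ring_1 set"
  assumes I: "ring_ideal Q" and sp: "\<forall>a. a*a \<in> Q \<longrightarrow> a \<in> Q" and ab: "a*b \<in> Q"
  shows "b*a \<in> Q"
proof -
  have "b*(a*b)*a \<in> Q" using I ab unfolding ring_ideal_def by blast
  then have "(b*a)*(b*a) \<in> Q" by (simp add: mult.assoc)
  then show ?thesis using sp by blast
qed

lemma csp_ins:
  fixes Q :: "'r::ring_1 set"
  assumes I: "ring_ideal Q" and sp: "\<forall>a. a*a \<in> Q \<longrightarrow> a \<in> Q" and ab: "a*b \<in> Q"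
  shows "a*r*b \<in> Q"
proof -
  have "b*a \<in> Q" using csp_comm[OF I sp ab] .
  then have "(a*r)*(b*a)*(r*b) \<in> Q" using I unfolding ring_ideal_def by blast
  then have "(a*r*b)*(a*r*b) \<in> Q" by (simp add: mult.assoc)
  then show ?thesis using sp by blast
qed

lemma annih_ideal:
  fixes Q :: "'r::ring_1 set"
  assumes I: "ring_ideal Q" and sp: "\<forall>a. a*a \<in> Q \<longrightarrow> a \<in> Q"
  shows "ring_ideal {y. a*y \<in> Q}" and "\<forall>y. y*y \<in> {y. a*y \<in> Q} \<longrightarrow> y \<in> {y. a*y \<in> Q}"
    and "Q \<subseteq> {y. a*y \<in> Q}"
proof -
  show "ring_ideal {y. a*y \<in> Q}"
  proof -
    have "a*(r*x) \<in> Q" if "a*x \<in> Q" for x r using csp_ins[OF I sp that] by (simp add: mult.assoc[symmetric])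
    moreover have "a*(x*r) \<in> Q" if "a*x \<in> Q" for x r using ideal_rmult[OF I that, of r] by (simp add: mult.assoc)
    moreover have "a*(x+y) \<in> Q" if "a*x \<in> Q" "a*y \<in> Q" for x y using that I unfolding ring_ideal_def by (simp add: distrib_left)
    moreover have "a*(-x) \<in> Q" if "a*x \<in> Q" for x using that I unfolding ring_ideal_def by simp
    moreover have "a*0 \<in> Q" using I unfolding ring_ideal_def by simp
    ultimately show ?thesis unfolding ring_ideal_def by blast
  qed
  show "\<forall>y. y*y \<in> {y. a*y \<in> Q} \<longrightarrow> y \<in> {y. a*y \<in> Q}"
  proof (intro allI impI)
    fix y assume "y*y \<in> {y. a*y \<in> Q}"
    then have "(a*y)*y \<in> Q" by (simp add: mult.assoc)
    then have "(a*y)*a*y \<in> Q" using csp_ins[OF I sp] by blast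
    then have "(a*y)*(a*y) \<in> Q" by (simp add: mult.assoc)
    then show "y \<in> {y. a*y \<in> Q}" using sp by blast
  qed
  show "Q \<subseteq> {y. a*y \<in> Q}" using I unfolding ring_ideal_def by blast
qed

lemma exists_cp_ideal:
  fixes c :: "'r::ring_1"
  assumes tp: "two_primal TYPE('r)" and c: "c \<notin> nilpotent_elems"
  shows "\<exists>Q. ring_ideal Q \<and> c \<notin> Q \<and> (\<forall>a b. a*b \<in> Q \<longrightarrow> a \<in> Q \<or> b \<in> Q)"
proof -
  define F where "F = {Q::'r set. ring_ideal Q \<and> (\<forall>a. a*a \<in> Q \<longrightarrow> a \<in> Q) \<and> c \<notin> Q}"
  have "nilpotent_elems \<in> F" unfolding F_def using nil_ideal[OF tp] nil_semiprime c by blast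
  then have "F \<noteq> {}" by blast
  moreover have "\<Union>C \<in> F" if "C \<noteq> {}" "subset.chain F C" for C
  proof -
    have CF: "C \<subseteq> F" and tot: "\<forall>X\<in>C. \<forall>Y\<in>C. X \<subseteq> Y \<or> Y \<subseteq> X"
      using that(2) by (auto simp: subset_chain_def)
    have "\<forall>X\<in>C. ring_ideal X" using CF unfolding F_def by blast
    then have "ring_ideal (\<Union>C)" using chain_union_ideal[OF that(1)] tot by blast
    moreover have "\<forall>a. a*a \<in> \<Union>C \<longrightarrow> a \<in> \<Union>C" using CF unfolding F_def by blast
    moreover have "c \<notin> \<Union>C" using CF unfolding F_def by blast
    ultimately show ?thesis unfolding F_def by blast
  qed
  ultimately have "\<exists>Q\<in>F. \<forall>X\<in>F. Q \<subseteq> X \<longrightarrow> X = Q" by (rule subset_Zorn_nonempty)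
  then obtain Q where QF: "Q \<in> F" and mx: "\<forall>X\<in>F. Q \<subseteq> X \<longrightarrow> X = Q" by blast
  have I: "ring_ideal Q" and sp: "\<forall>a. a*a \<in> Q \<longrightarrow> a \<in> Q" and cQ: "c \<notin> Q" using QF unfolding F_def by blast+
  have "a \<in> Q \<or> b \<in> Q" if ab: "a*b \<in> Q" for a b
  proof (rule ccontr)
    assume "\<not> (a \<in> Q \<or> b \<in> Q)"
    then have aQ: "a \<notin> Q" and bQ: "b \<notin> Q" by auto
    note A = annih_ideal[OF I sp, of a]
    have "{y. a*y \<in> Q} \<noteq> Q" using ab bQ by auto
    then have "{y. a*y \<in> Q} \<notin> F" using mx A(3) by blast
    then have "a*c \<in> Q" using A(1,2) unfolding F_def by blast
    then have caQ: "c*a \<in> Q" using csp_comm[OF I sp] by blast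
    note B = annih_ideal[OF I sp, of c]
    have "c \<notin> {y. c*y \<in> Q}" using sp cQ by blast
    then have "{y. c*y \<in> Q} \<in> F" using B(1,2) unfolding F_def by blast
    moreover have "{y. c*y \<in> Q} \<noteq> Q" using caQ aQ by auto
    ultimately show False using mx B(3) by blast
  qed
  then show ?thesis using I cQ by blast
qed

lemma seq_right:
  fixes s :: "nat \<Rightarrow> 'r::ring_1"
  assumes rec: "\<forall>n. \<exists>t. s (Suc n) = s n * t * s n"
  shows "\<exists>x. s (i+n) = s i * x" "\<exists>y. s (i+n) = y * s i"
proof -
  show "\<exists>x. s (i+n) = s i * x"
  proof (induction n)
    case 0 show ?case by (rule exI[of _ 1]) simp
  next
    case (Suc n)
    then obtain x where x: "s (i+n) = s i * x" by blast
    obtain t where "s (Suc (i+n)) = s (i+n) * t * s (i+n)" using rec by blast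
    then have "s (i + Suc n) = s i * (x * t * s (i+n))" using x by (simp add: mult.assoc)
    then show ?case by blast
  qed
  show "\<exists>y. s (i+n) = y * s i"
  proof (induction n)
    case 0 show ?case by (rule exI[of _ 1]) simp
  next
    case (Suc n)
    then obtain x where x: "s (i+n) = x * s i" by blast
    obtain t where "s (Suc (i+n)) = s (i+n) * t * s (i+n)" using rec by blast
    then have "s (i + Suc n) = (s (i+n) * t * x) * s i" using x by (simp add: mult.assoc)
    then show ?case by blast
  qed
qed

lemma seq_msys:
  fixes s :: "nat \<Rightarrow> 'r::ring_1"
  assumes rec: "\<forall>n. \<exists>t. s (Suc n) = s n * t * s n"
  shows "\<exists>t l. s l = s i * t * s j"
proof (cases "i \<le> j")
  case True
  then obtain n where j: "j = i + n" using le_Suc_ex by blast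
  obtain x where x: "s j = s i * x" using seq_right(1)[OF rec, of i n] j by blast
  obtain t where "s (Suc j) = s j * t * s j" using rec by blast
  then have "s (Suc j) = s i * (x * t) * s j" using x by (simp add: mult.assoc)
  then show ?thesis by blast
next
  case False
  then obtain n where j: "i = j + n" using le_Suc_ex[of j i] by auto
  obtain y where y: "s i = y * s j" using seq_right(2)[OF rec, of j n] j by blast
  obtain t where "s (Suc i) = s i * t * s i" using rec by blast
  then have "s (Suc i) = s i * (t * y) * s j" using y by (simp add: mult.assoc)
  then show ?thesis by blast
qed

lemma nil_strongly:
  fixes s :: "nat \<Rightarrow> 'r::ring_1"
  assumes tp: "two_primal TYPE('r)" and a: "s 0 \<in> nilpotent_elems"
    and rec: "\<forall>n. \<exists>t. s (Suc n) = s n * t * s n"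
  shows "\<exists>k. s k = 0"
proof (rule ccontr)
  assume nz: "\<not> (\<exists>k. s k = 0)"
  define F where "F = {Q::'r set. ring_ideal Q \<and> Q \<inter> range s = {}}"
  have "{0} \<in> F" using nz by (auto simp: F_def ring_ideal_def)
  then have "F \<noteq> {}" by blast
  moreover have "\<Union>C \<in> F" if "C \<noteq> {}" "subset.chain F C" for C
  proof -
    have CF: "C \<subseteq> F" and tot: "\<forall>X\<in>C. \<forall>Y\<in>C. X \<subseteq> Y \<or> Y \<subseteq> X"
      using that(2) by (auto simp: subset_chain_def)
    have "ring_ideal (\<Union>C)" using chain_union_ideal[OF that(1)] CF tot by (auto simp: F_def)
    moreover have "\<Union>C \<inter> range s = {}" using CF by (auto simp: F_def)
    ultimately show ?thesis by (simp add: F_def)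
  qed
  ultimately have "\<exists>Q\<in>F. \<forall>X\<in>F. Q \<subseteq> X \<longrightarrow> X = Q" by (rule subset_Zorn_nonempty)
  then obtain Q where QF: "Q \<in> F" and mx: "\<forall>X\<in>F. Q \<subseteq> X \<longrightarrow> X = Q" by blast
  have I: "ring_ideal Q" and dis: "Q \<inter> range s = {}" using QF by (auto simp: F_def)
  have meet: "\<exists>i q a. s i = q + a \<and> q \<in> Q \<and> a \<in> A"
    if A: "ring_ideal A" "\<not> A \<subseteq> Q" for A
  proof -
    define QA where "QA = {q + a | q a. q \<in> Q \<and> a \<in> A}"
    have "ring_ideal QA" unfolding ring_ideal_def QA_def
    proof (intro conjI ballI allI)
      show "0 \<in> {q + a |q a. q \<in> Q \<and> a \<in> A}"
        by (intro CollectI exI[of _ 0] conjI) (simp_all add: ideal_zero I A(1))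
    next
      fix x y assume "x \<in> {q + a |q a. q \<in> Q \<and> a \<in> A}" "y \<in> {q + a |q a. q \<in> Q \<and> a \<in> A}"
      then obtain q1 a1 q2 a2 where "x = q1 + a1" "y = q2 + a2" "q1 \<in> Q" "q2 \<in> Q" "a1 \<in> A" "a2 \<in> A" by blast
      moreover have "x + y = (q1 + q2) + (a1 + a2)" using calculation by (simp add: algebra_simps)
      ultimately show "x + y \<in> {q + a |q a. q \<in> Q \<and> a \<in> A}" using I A(1) unfolding ring_ideal_def by blast
    next
      fix x assume "x \<in> {q + a |q a. q \<in> Q \<and> a \<in> A}"
      then obtain q1 a1 where "x = q1 + a1" "q1 \<in> Q" "a1 \<in> A" by blast
      moreover have "-x = (-q1) + (-a1)" using calculation by simp
      ultimately show "-x \<in> {q + a |q a. q \<in> Q \<and> a \<in> A}" using I A(1) unfolding ring_ideal_def by blast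
    next
      fix x r assume "x \<in> {q + a |q a. q \<in> Q \<and> a \<in> A}"
      then obtain q1 a1 where x: "x = q1 + a1" "q1 \<in> Q" "a1 \<in> A" by blast
      have "r*x = r*q1 + r*a1" "x*r = q1*r + a1*r" using x by (simp_all add: algebra_simps)
      then show "r*x \<in> {q + a |q a. q \<in> Q \<and> a \<in> A}" "x*r \<in> {q + a |q a. q \<in> Q \<and> a \<in> A}"
        using x I A(1) unfolding ring_ideal_def by blast+
    qed
    moreover have "Q \<subseteq> QA"
    proof
      fix q assume q: "q \<in> Q"
      show "q \<in> QA" unfolding QA_def
        by (intro CollectI exI[of _ q] exI[of _ 0] conjI) (simp_all add: ideal_zero A(1) q)
    qed
    moreover have "QA \<noteq> Q"
    proof -
      obtain a where "a \<in> A" "a \<notin> Q" using A by blast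
      moreover have "a \<in> QA" unfolding QA_def
        by (intro CollectI exI[of _ 0] exI[of _ a] conjI) (simp_all add: ideal_zero I calculation)
      ultimately show ?thesis by blast
    qed
    ultimately have "QA \<notin> F" using mx by blast
    then have "QA \<inter> range s \<noteq> {}" using \<open>ring_ideal QA\<close> by (simp add: F_def)
    then obtain z where z1: "z \<in> QA" and z2: "z \<in> range s" by blast
    from z1 obtain q a where "z = q + a" "q \<in> Q" "a \<in> A" unfolding QA_def by blast
    moreover from z2 obtain i where "z = s i" by blast
    ultimately have "s i = q + a \<and> q \<in> Q \<and> a \<in> A" by simp
    then show ?thesis by blast
  qed
  have "prime_ideal Q" unfolding prime_ideal_def
  proof (intro conjI allI impI)
    show "ring_ideal Q" by fact
    show "Q \<noteq> UNIV" using dis by blast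
    fix A B assume A: "ring_ideal A" and B: "ring_ideal B" and AB: "\<forall>a\<in>A. \<forall>b\<in>B. a * b \<in> Q"
    show "A \<subseteq> Q \<or> B \<subseteq> Q"
    proof (rule ccontr)
      assume "\<not> (A \<subseteq> Q \<or> B \<subseteq> Q)"
      then have nA: "\<not> A \<subseteq> Q" and nB: "\<not> B \<subseteq> Q" by auto
      obtain i q a where 1: "s i = q + a" "q \<in> Q" "a \<in> A" using meet[OF A nA] by blast
      obtain j q' b where 2: "s j = q' + b" "q' \<in> Q" "b \<in> B" using meet[OF B nB] by blast
      obtain t l where l: "s l = s i * t * s j" using seq_msys[OF rec] by blast
      have e: "s l = q * (t * s j) + (a * t) * q' + a * (t * b)" using l 1 2 by (simp add: algebra_simps)
      have Qm: "\<forall>x\<in>Q. \<forall>r. r * x \<in> Q \<and> x * r \<in> Q" and Qa: "\<forall>x\<in>Q. \<forall>y\<in>Q. x + y \<in> Q"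
        using I unfolding ring_ideal_def by auto
      have x1: "q * (t * s j) \<in> Q" using Qm 1(2) by blast
      have x2: "(a*t)*q' \<in> Q" using Qm 2(2) by blast
      have "t * b \<in> B" using B 2 unfolding ring_ideal_def by blast
      then have x3: "a * (t*b) \<in> Q" using AB 1 by blast
      have "q * (t * s j) + (a * t) * q' \<in> Q" using Qa x1 x2 by blast
      then have "s l \<in> Q" unfolding e using Qa x3 by blast
      then show False using dis by blast
    qed
  qed
  then have "prime_radical \<subseteq> Q" by (auto simp: prime_radical_def)
  moreover have "s 0 \<in> prime_radical" using a tp by (simp add: two_primal_def)
  ultimately show False using dis by blast
qed

locale lmod = fixes M :: "('r::ring_1, 'm) lmodule" assumes ism: "is_lmodule M"
begin

lemma zero_closed[simp]: "zero M \<in> carrier M" using ism unfolding is_lmodule_def by (elim conjE) blast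
lemma add_closed[simp]: "x \<in> carrier M \<Longrightarrow> y \<in> carrier M \<Longrightarrow> add M x y \<in> carrier M"
  using ism unfolding is_lmodule_def by (elim conjE) blast
lemma smult_closed[simp]: "x \<in> carrier M \<Longrightarrow> smult M r x \<in> carrier M"
  using ism unfolding is_lmodule_def by (elim conjE) blast
lemma add_assoc: "x \<in> carrier M \<Longrightarrow> y \<in> carrier M \<Longrightarrow> z \<in> carrier M \<Longrightarrow> add M (add M x y) z = add M x (add M y z)"
  using ism unfolding is_lmodule_def by (elim conjE) blast
lemma add_comm: "x \<in> carrier M \<Longrightarrow> y \<in> carrier M \<Longrightarrow> add M x y = add M y x"
  using ism unfolding is_lmodule_def by (elim conjE) blast
lemma add_zero_l[simp]: "x \<in> carrier M \<Longrightarrow> add M (zero M) x = x"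
  using ism unfolding is_lmodule_def by (elim conjE) blast
lemma add_zero_r[simp]: "x \<in> carrier M \<Longrightarrow> add M x (zero M) = x"
  using add_comm[of x "zero M"] by simp
lemma add_inv: "x \<in> carrier M \<Longrightarrow> \<exists>y\<in>carrier M. add M x y = zero M"
  using ism unfolding is_lmodule_def by (elim conjE) blast
lemma smult_add_r: "x \<in> carrier M \<Longrightarrow> y \<in> carrier M \<Longrightarrow> smult M r (add M x y) = add M (smult M r x) (smult M r y)"
  using ism unfolding is_lmodule_def by (elim conjE) blast
lemma smult_add_l: "x \<in> carrier M \<Longrightarrow> smult M (r + s) x = add M (smult M r x) (smult M s x)"
  using ism unfolding is_lmodule_def by (elim conjE) blast
lemma smult_mult: "x \<in> carrier M \<Longrightarrow> smult M (r * s) x = smult M r (smult M s x)"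
  using ism unfolding is_lmodule_def by (elim conjE) blast
lemma smult_one[simp]: "x \<in> carrier M \<Longrightarrow> smult M 1 x = x"
  using ism unfolding is_lmodule_def by (elim conjE) simp

lemma add_cancel_l:
  assumes "x \<in> carrier M" "y \<in> carrier M" "z \<in> carrier M" "add M x y = add M x z"
  shows "y = z"
proof -
  obtain w where w: "w \<in> carrier M" "add M x w = zero M" using add_inv assms(1) by blast
  have "add M (add M w x) y = add M (add M w x) z" using assms w by (simp add: add_assoc)
  then show ?thesis using w assms by (simp add: add_comm)
qed

lemma idem_zero: "x \<in> carrier M \<Longrightarrow> add M x x = x \<Longrightarrow> x = zero M"
  using add_cancel_l[of x x "zero M"] by simp

lemma smult_zero[simp]: "smult M r (zero M) = zero M"
proof -
  have "add M (smult M r (zero M)) (smult M r (zero M)) = smult M r (zero M)"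
    using smult_add_r[of "zero M" "zero M" r] by simp
  then show ?thesis using idem_zero[of "smult M r (zero M)"] by simp
qed

lemma zero_smult[simp]: "x \<in> carrier M \<Longrightarrow> smult M 0 x = zero M"
  using smult_add_l[of x 0 0] idem_zero[of "smult M 0 x"] by simp

lemma msum_Nil[simp]: "msum M [] = zero M" by (simp add: msum_def)
lemma msum_Cons[simp]: "msum M (x # xs) = add M x (msum M xs)" by (simp add: msum_def)

lemma msum_closed[simp]: "set xs \<subseteq> carrier M \<Longrightarrow> msum M xs \<in> carrier M"
  by (induction xs) auto

lemma msum_append: "set xs \<subseteq> carrier M \<Longrightarrow> set ys \<subseteq> carrier M \<Longrightarrow> msum M (xs @ ys) = add M (msum M xs) (msum M ys)"
  by (induction xs) (auto simp: add_assoc)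

lemma msum_remove1: "x \<in> set ys \<Longrightarrow> set ys \<subseteq> carrier M \<Longrightarrow> msum M ys = add M x (msum M (remove1 x ys))"
proof (induction ys)
  case Nil then show ?case by simp
next
  case (Cons y ys)
  show ?case
  proof (cases "x = y")
    case True then show ?thesis by simp
  next
    case False
    then have "x \<in> set ys" using Cons by simp
    then have "msum M ys = add M x (msum M (remove1 x ys))" using Cons by simp
    moreover have R: "msum M (remove1 x ys) \<in> carrier M" using Cons(3) set_remove1_subset
      by (metis msum_closed set_subset_Cons subset_trans)
    moreover have "x \<in> carrier M" "y \<in> carrier M" using Cons(3) \<open>x \<in> set ys\<close> by auto
    ultimately have "add M y (msum M ys) = add M x (add M y (msum M (remove1 x ys)))"
      by (metis add_assoc add_comm)
    then show ?thesis using False by simp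
  qed
qed

lemma msum_perm: "distinct xs \<Longrightarrow> distinct ys \<Longrightarrow> set xs = set ys \<Longrightarrow> set xs \<subseteq> carrier M \<Longrightarrow> msum M xs = msum M ys"
proof (induction xs arbitrary: ys)
  case Nil then have "ys = []" by simp
  then show ?case by simp
next
  case (Cons x xs)
  have xy: "x \<in> set ys" using Cons(4) by auto
  have "set xs = set (remove1 x ys)" using Cons(2,3,4) by (auto simp: set_remove1_eq)
  moreover have "distinct (remove1 x ys)" using Cons(3) by simp
  moreover have "distinct xs" using Cons(2) by simp
  moreover have "set xs \<subseteq> carrier M" using Cons(5) by simp
  ultimately have "msum M xs = msum M (remove1 x ys)" using Cons.IH by blast
  moreover have "set ys \<subseteq> carrier M" using Cons(4,5) by simp
  ultimately show ?case using msum_remove1[OF xy] by simp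
qed

lemma msum_map_closed[simp]: "\<forall>x\<in>set xs. f x \<in> carrier M \<Longrightarrow> msum M (map f xs) \<in> carrier M"
  by (induction xs) auto

lemma msum_map_add:
  assumes "\<forall>x\<in>set xs. f x \<in> carrier M \<and> g x \<in> carrier M"
  shows "msum M (map (\<lambda>x. add M (f x) (g x)) xs) = add M (msum M (map f xs)) (msum M (map g xs))"
  using assms
proof (induction xs)
  case Nil then show ?case by simp
next
  case (Cons a xs)
  let ?F = "msum M (map f xs)" and ?G = "msum M (map g xs)"
  have c1: "?F \<in> carrier M" "?G \<in> carrier M" using Cons(2) by (intro msum_closed; auto)+
  have c: "?F \<in> carrier M" "?G \<in> carrier M" "f a \<in> carrier M" "g a \<in> carrier M" using Cons(2) c1 by auto
  have "msum M (map (\<lambda>x. add M (f x) (g x)) (a # xs)) = add M (add M (f a) (g a)) (add M ?F ?G)"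
    using Cons by simp
  also have "\<dots> = add M (f a) (add M (g a) (add M ?F ?G))" using c by (simp add: add_assoc)
  also have "add M (g a) (add M ?F ?G) = add M ?F (add M (g a) ?G)"
    using c by (metis add_assoc add_comm)
  finally show ?case using c by (simp add: add_assoc)
qed

lemma msum_map_smult:
  assumes "\<forall>x\<in>set xs. f x \<in> carrier M"
  shows "msum M (map (\<lambda>x. smult M r (f x)) xs) = smult M r (msum M (map f xs))"
  using assms by (induction xs) (auto simp: smult_add_r)

lemma msum_filter:
  assumes "\<forall>x\<in>set xs. f x \<in> carrier M" "\<forall>x\<in>set xs. \<not> P x \<longrightarrow> f x = zero M"
  shows "msum M (map f xs) = msum M (map f (filter P xs))"
  using assms by (induction xs) auto

lemma submodule_msum: "submodule M N \<Longrightarrow> set xs \<subseteq> N \<Longrightarrow> msum M xs \<in> N"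
  by (induction xs) (auto simp: submodule_def)

lemma submodule_carrier: "submodule M (carrier M)"
  by (simp add: submodule_def)

lemma gen_sub: "submodule M (gen_submodule M S)" if "S \<subseteq> carrier M"
proof -
  let ?F = "{N. submodule M N \<and> S \<subseteq> N}"
  have c: "carrier M \<in> ?F" using that submodule_carrier by simp
  have "\<Inter>?F \<subseteq> carrier M" using c by blast
  moreover have "zero M \<in> \<Inter>?F" by (auto simp: submodule_def)
  moreover have "\<forall>x\<in>\<Inter>?F. \<forall>y\<in>\<Inter>?F. add M x y \<in> \<Inter>?F" by (auto simp: submodule_def)
  moreover have "\<forall>r. \<forall>x\<in>\<Inter>?F. smult M r x \<in> \<Inter>?F" by (auto simp: submodule_def)
  ultimately show ?thesis unfolding gen_submodule_def submodule_def by blast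
qed

end

context lmod begin

lemma sub_carrier: "submodule M N \<Longrightarrow> N \<subseteq> carrier M" by (simp add: submodule_def)
lemma sub_zero: "submodule M N \<Longrightarrow> zero M \<in> N" by (simp add: submodule_def)
lemma sub_add: "submodule M N \<Longrightarrow> x \<in> N \<Longrightarrow> y \<in> N \<Longrightarrow> add M x y \<in> N" by (simp add: submodule_def)
lemma sub_smult: "submodule M N \<Longrightarrow> x \<in> N \<Longrightarrow> smult M r x \<in> N" by (simp add: submodule_def)

lemma cp_prime:
  assumes "completely_prime_submodule M P" shows "prime_submodule M P"
proof -
  have S: "submodule M P" and nt: "\<not> (\<forall>r. \<forall>m\<in>carrier M. smult M r m \<in> P)"
    and cp: "\<forall>r. \<forall>m\<in>carrier M. smult M r m \<in> P \<longrightarrow> m \<in> P \<or> (\<forall>m'\<in>carrier M. smult M r m' \<in> P)"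
    using assms unfolding completely_prime_submodule_def by blast+
  have "K \<subseteq> P \<or> (\<forall>a\<in>A. \<forall>m\<in>carrier M. smult M a m \<in> P)"
    if K: "submodule M K" and AK: "\<forall>a\<in>A. \<forall>k\<in>K. smult M a k \<in> P" for A K
  proof (cases "K \<subseteq> P")
    case False
    then obtain k where k: "k \<in> K" "k \<notin> P" by blast
    then have kc: "k \<in> carrier M" using sub_carrier[OF K] by blast
    show ?thesis using AK k kc cp by blast
  qed simp
  then show ?thesis unfolding prime_submodule_def using S nt by blast
qed

lemma beta_sub: "beta M \<subseteq> beta_co M"
proof -
  have bc: "beta M \<subseteq> carrier M"
  proof (cases "{P. prime_submodule M P} = {}")
    case True then show ?thesis by (simp add: beta_def)
  next
    case False
    then obtain P where "prime_submodule M P" by blast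
    then have "P \<subseteq> carrier M" using sub_carrier by (simp add: prime_submodule_def)
    then show ?thesis using False \<open>prime_submodule M P\<close> by (auto simp: beta_def)
  qed
  show ?thesis
  proof (cases "{P. completely_prime_submodule M P} = {}")
    case True then show ?thesis using bc by (simp add: beta_co_def)
  next
    case False
    then have "{P. prime_submodule M P} \<noteq> {}" using cp_prime by blast
    then show ?thesis using False cp_prime unfolding beta_def beta_co_def by auto
  qed
qed

lemma E_in_cp:
  assumes cpP: "completely_prime_submodule M P" shows "E_M M {zero M} \<subseteq> P"
proof
  fix x assume "x \<in> E_M M {zero M}"
  then obtain r m k where x: "x = smult M r m" "m \<in> carrier M" "smult M (r ^ k) m = zero M"
    unfolding E_M_def by blast
  have S: "submodule M P"
    and cp: "\<forall>r. \<forall>m\<in>carrier M. smult M r m \<in> P \<longrightarrow> m \<in> P \<or> (\<forall>m'\<in>carrier M. smult M r m' \<in> P)"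
    using cpP unfolding completely_prime_submodule_def by blast+
  have "\<forall>m\<in>carrier M. smult M (r^k) m \<in> P \<longrightarrow> smult M r m \<in> P" for k
  proof (induction k)
    case 0 then show ?case using sub_smult[OF S] by simp
  next
    case (Suc k)
    show ?case
    proof (intro ballI impI)
      fix m assume m: "m \<in> carrier M" and h: "smult M (r ^ Suc k) m \<in> P"
      have "smult M r (smult M (r^k) m) \<in> P" using h m by (simp add: smult_mult)
      then have "smult M (r^k) m \<in> P \<or> (\<forall>m'\<in>carrier M. smult M r m' \<in> P)" using cp m by simp
      then show "smult M r m \<in> P" using Suc.IH m by blast
    qed
  qed
  then show "x \<in> P" using x sub_zero[OF S] by metis
qed

lemma E_carrier: "E_M M {zero M} \<subseteq> carrier M"
  unfolding E_M_def by auto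

lemma N0_sub: "gen_submodule M (E_M M {zero M}) \<subseteq> beta_co M"
proof (cases "{P. completely_prime_submodule M P} = {}")
  case True
  then show ?thesis using submodule_carrier E_carrier
    unfolding beta_co_def gen_submodule_def by auto
next
  case False
  have "gen_submodule M (E_M M {zero M}) \<subseteq> P" if "completely_prime_submodule M P" for P
  proof -
    have "submodule M P" using that by (simp add: completely_prime_submodule_def)
    then show ?thesis using E_in_cp[OF that] unfolding gen_submodule_def by blast
  qed
  then show ?thesis using False unfolding beta_co_def by auto
qed

lemma prime_step:
  assumes pP: "prime_submodule M P" and m: "m \<in> carrier M" and bt: "smult M (b*t) m \<notin> P"
  shows "\<exists>u t'. smult M (b*u*b*t') m \<notin> P"
proof (rule ccontr)
  assume "\<not> (\<exists>u t'. smult M (b*u*b*t') m \<notin> P)"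
  then have H: "\<forall>u t'. smult M (b*u*b*t') m \<in> P" by blast
  have S: "submodule M P" and
    pr: "\<forall>A K. ring_ideal A \<longrightarrow> submodule M K \<longrightarrow> (\<forall>a\<in>A. \<forall>k\<in>K. smult M a k \<in> P) \<longrightarrow>
        K \<subseteq> P \<or> (\<forall>a\<in>A. \<forall>m\<in>carrier M. smult M a m \<in> P)"
    using pP unfolding prime_submodule_def by blast+
  define A where "A = {a. \<forall>u t. smult M (a*u*b*t) m \<in> P}"
  define K where "K = {k\<in>carrier M. \<forall>a\<in>A. smult M a k \<in> P}"
  have bA: "b \<in> A" using H by (simp add: A_def)
  have IA: "ring_ideal A" unfolding ring_ideal_def
  proof (intro conjI ballI allI)
    show "0 \<in> A" unfolding A_def using m sub_zero[OF S] by simp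
  next
    fix x y assume "x \<in> A" "y \<in> A"
    then show "x + y \<in> A" unfolding A_def using m sub_add[OF S]
      by (simp add: distrib_right smult_add_l)
  next
    fix x assume "x \<in> A"
    then have "smult M (-1) (smult M (x*u*b*t) m) \<in> P" for u t unfolding A_def using sub_smult[OF S] by blast
    then show "-x \<in> A" unfolding A_def using m by (simp add: smult_mult[symmetric])
  next
    fix x r assume xA: "x \<in> A"
    then have "smult M r (smult M (x*u*b*t) m) \<in> P" for u t unfolding A_def using sub_smult[OF S] by blast
    then show "r * x \<in> A" unfolding A_def using m by (simp add: smult_mult[symmetric] mult.assoc)
    have "smult M (x*(r*u)*b*t) m \<in> P" for u t using xA unfolding A_def by blast
    then show "x * r \<in> A" unfolding A_def by (simp add: mult.assoc)
  qed
  have SK: "submodule M K" unfolding submodule_def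
  proof (intro conjI ballI allI)
    show "K \<subseteq> carrier M" unfolding K_def by blast
    show "zero M \<in> K" unfolding K_def using sub_zero[OF S] by simp
  next
    fix x y assume "x \<in> K" "y \<in> K"
    then show "add M x y \<in> K" unfolding K_def using sub_add[OF S] by (simp add: smult_add_r)
  next
    fix r x assume xK: "x \<in> K"
    have "smult M (a*r) x \<in> P" if "a \<in> A" for a using xK that ideal_rmult[OF IA] unfolding K_def by blast
    then show "smult M r x \<in> K" using xK unfolding K_def by (simp add: smult_mult)
  qed
  have AK: "\<forall>a\<in>A. \<forall>k\<in>K. smult M a k \<in> P" unfolding K_def by blast
  have btK: "smult M (b*t) m \<in> K"
  proof -
    have "smult M (a*1*b*t) m \<in> P" if "a \<in> A" for a using that unfolding A_def by blast
    then show ?thesis unfolding K_def using m by (simp add: smult_mult mult.assoc)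
  qed
  from pr IA SK AK have "K \<subseteq> P \<or> (\<forall>a\<in>A. \<forall>m\<in>carrier M. smult M a m \<in> P)" by blast
  then show False
  proof
    assume "K \<subseteq> P" then show False using btK bt by blast
  next
    assume "\<forall>a\<in>A. \<forall>m\<in>carrier M. smult M a m \<in> P"
    then have "smult M b (smult M t m) \<in> P" using bA m by simp
    then show False using bt m by (simp add: smult_mult)
  qed
qed

lemma sn_in_prime:
  assumes pP: "prime_submodule M P" and m: "m \<in> carrier M"
    and sn: "\<forall>s :: nat \<Rightarrow> 'r. s 0 = a \<longrightarrow> (\<forall>n. \<exists>t. s (Suc n) = s n * t * s n) \<longrightarrow>
           (\<exists>k. \<forall>t. smult M (s k * t) m = zero M)"
  shows "smult M a m \<in> P"
proof (rule ccontr)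
  assume na: "smult M a m \<notin> P"
  have S: "submodule M P" using pP by (simp add: prime_submodule_def)
  define nx where "nx b = (SOME u. \<exists>t'. smult M (b*u*b*t') m \<notin> P)" for b
  define s where "s = rec_nat a (\<lambda>_ b. b * nx b * b)"
  have s0: "s 0 = a" and sS: "s (Suc n) = s n * nx (s n) * s n" for n by (simp_all add: s_def)
  have inv: "\<exists>t. smult M (s n * t) m \<notin> P" for n
  proof (induction n)
    case 0 show ?case using na m s0 by (intro exI[of _ 1]) simp
  next
    case (Suc n)
    then obtain t where "smult M (s n * t) m \<notin> P" by blast
    then have "\<exists>u t'. smult M (s n*u*s n*t') m \<notin> P" using prime_step[OF pP m] by blast
    then have "\<exists>t'. smult M (s n * nx (s n) * s n * t') m \<notin> P" unfolding nx_def by (rule someI_ex)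
    then show ?case using sS by simp
  qed
  have "\<forall>n. \<exists>t. s (Suc n) = s n * t * s n" using sS by blast
  then obtain k where "\<forall>t. smult M (s k * t) m = zero M" using sn s0 by blast
  then show False using inv[of k] sub_zero[OF S] by auto
qed

lemma Ns_carrier: "strongly_nilpotent_elems M \<subseteq> carrier M"
proof
  fix x assume "x \<in> strongly_nilpotent_elems M"
  then obtain ps :: "('r \<times> 'm) list" where c: "\<forall>(a, m) \<in> set ps. m \<in> carrier M"
    and x: "x = msum M (map (\<lambda>(a, m). smult M a m) ps)"
    unfolding strongly_nilpotent_elems_def by blast
  have "set (map (\<lambda>(a, m). smult M a m) ps) \<subseteq> carrier M" using c by auto
  then show "x \<in> carrier M" using x by simp
qed

lemma Ns_sub: "strongly_nilpotent_elems M \<subseteq> beta M"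
proof (cases "{P. prime_submodule M P} = {}")
  case True then show ?thesis using Ns_carrier by (simp add: beta_def)
next
  case False
  have "x \<in> P" if x: "x \<in> strongly_nilpotent_elems M" and pP: "prime_submodule M P" for x P
  proof -
    have S: "submodule M P" using pP by (simp add: prime_submodule_def)
    obtain ps :: "('r \<times> 'm) list" where c: "\<forall>(a, m) \<in> set ps. m \<in> carrier M"
      and xe: "x = msum M (map (\<lambda>(a, m). smult M a m) ps)"
      and sn: "\<forall>(a, m) \<in> set ps. \<forall>s :: nat \<Rightarrow> 'r.
           s 0 = a \<longrightarrow> (\<forall>n. \<exists>t. s (Suc n) = s n * t * s n) \<longrightarrow>
           (\<exists>k. \<forall>t. smult M (s k * t) m = zero M)"
      using x unfolding strongly_nilpotent_elems_def by blast
    have "set (map (\<lambda>(a, m). smult M a m) ps) \<subseteq> P"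
    proof
      fix y assume "y \<in> set (map (\<lambda>(a, m). smult M a m) ps)"
      then obtain a m where am: "(a, m) \<in> set ps" "y = smult M a m" by auto
      then show "y \<in> P" using sn_in_prime[OF pP, of m a] c sn by fastforce
    qed
    then show ?thesis using xe submodule_msum[OF S] by simp
  qed
  then show ?thesis using False unfolding beta_def by auto
qed

end

definition iota :: "'m \<Rightarrow> 'm \<Rightarrow> 'r::ring_1" where
  "iota x = (\<lambda>m. if m = x then 1 else 0)"

lemma inj_iota: "inj (iota :: 'm \<Rightarrow> 'm \<Rightarrow> 'r::ring_1)"
proof (rule injI)
  fix x y :: 'm assume "(iota x :: 'm \<Rightarrow> 'r) = iota y"
  then have "(iota x :: 'm \<Rightarrow> 'r) x = iota y x" by simp
  then show "x = y" unfolding iota_def by (cases "x = y") auto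
qed

lemma inv_iota[simp]: "inv (iota :: 'm \<Rightarrow> 'm \<Rightarrow> 'r::ring_1) (iota x) = x"
  using inj_iota by (rule inv_f_f)

definition supp :: "('m \<Rightarrow> 'r::ring_1) \<Rightarrow> 'm set" where
  "supp f = {m. f m \<noteq> 0}"

definition fsum :: "('r::ring_1, 'm) lmodule \<Rightarrow> ('m \<Rightarrow> 'r) \<Rightarrow> 'm" where
  "fsum M f = msum M (map (\<lambda>m. smult M (f m) m) (SOME xs. distinct xs \<and> set xs = supp f))"

definition freeM :: "('r::ring_1, 'm) lmodule \<Rightarrow> ('r, 'm \<Rightarrow> 'r) lmodule" where
  "freeM M = \<lparr>carrier = {f. (\<forall>m. m \<notin> carrier M \<longrightarrow> f m = 0) \<and> finite (supp f)},
     add = \<lambda>f g m. f m + g m, zero = \<lambda>_. 0, smult = \<lambda>r f m. r * f m\<rparr>"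

definition copyM :: "('r::ring_1, 'm) lmodule \<Rightarrow> ('r, 'm \<Rightarrow> 'r) lmodule" where
  "copyM M = \<lparr>carrier = iota ` carrier M,
     add = \<lambda>a b. iota (add M (inv iota a) (inv iota b)), zero = iota (zero M),
     smult = \<lambda>r a. iota (smult M r (inv iota a))\<rparr>"

definition gmap :: "('r::ring_1, 'm) lmodule \<Rightarrow> ('m \<Rightarrow> 'r) \<Rightarrow> ('m \<Rightarrow> 'r)" where
  "gmap M f = iota (fsum M f)"

lemma freeM_simps[simp]:
  "carrier (freeM M) = {f. (\<forall>m. m \<notin> carrier M \<longrightarrow> f m = 0) \<and> finite (supp f)}"
  "add (freeM M) = (\<lambda>f g m. f m + g m)" "zero (freeM M) = (\<lambda>_. 0)"
  "smult (freeM M) = (\<lambda>r f m. r * f m)"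
  by (simp_all add: freeM_def)

lemma copyM_simps[simp]:
  "carrier (copyM M) = iota ` carrier M"
  "add (copyM M) = (\<lambda>a b. iota (add M (inv iota a) (inv iota b)))" "zero (copyM M) = iota (zero M)"
  "smult (copyM M) = (\<lambda>r a. iota (smult M r (inv iota a)))"
  by (simp_all add: copyM_def)

lemma is_lmodule_freeM: "is_lmodule (freeM (M :: ('r::ring_1, 'm) lmodule))"
proof -
  have s1: "supp (\<lambda>m. f m + g m) \<subseteq> supp f \<union> supp g" for f g :: "'m \<Rightarrow> 'r"
    by (auto simp: supp_def)
  have s2: "supp (\<lambda>m. r * f m) \<subseteq> supp f" for r and f :: "'m \<Rightarrow> 'r"
    by (auto simp: supp_def)
  have s3: "supp (\<lambda>m. - f m) = supp f" for f :: "'m \<Rightarrow> 'r"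
    by (auto simp: supp_def)
  have s0: "supp (\<lambda>_::'m. 0::'r) = {}" by (simp add: supp_def)
  show ?thesis unfolding is_lmodule_def freeM_simps
  proof (intro conjI ballI allI)
    fix x y :: "'m \<Rightarrow> 'r" assume "x \<in> {f. (\<forall>m. m \<notin> carrier M \<longrightarrow> f m = 0) \<and> finite (supp f)}"
      "y \<in> {f. (\<forall>m. m \<notin> carrier M \<longrightarrow> f m = 0) \<and> finite (supp f)}"
    then show "(\<lambda>m. x m + y m) \<in> {f. (\<forall>m. m \<notin> carrier M \<longrightarrow> f m = 0) \<and> finite (supp f)}"
      using s1[of x y] finite_subset by auto
  next
    fix x :: "'m \<Rightarrow> 'r" and r :: 'r assume "x \<in> {f. (\<forall>m. m \<notin> carrier M \<longrightarrow> f m = 0) \<and> finite (supp f)}"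
    then show "(\<lambda>m. r * x m) \<in> {f. (\<forall>m. m \<notin> carrier M \<longrightarrow> f m = 0) \<and> finite (supp f)}"
      using s2[of r x] finite_subset by auto
  next
    fix x :: "'m \<Rightarrow> 'r" assume x: "x \<in> {f. (\<forall>m. m \<notin> carrier M \<longrightarrow> f m = 0) \<and> finite (supp f)}"
    show "\<exists>y\<in>{f. (\<forall>m. m \<notin> carrier M \<longrightarrow> f m = 0) \<and> finite (supp f)}. (\<lambda>m. x m + y m) = (\<lambda>_. 0)"
      using x s3[of x] by (intro bexI[of _ "\<lambda>m. - x m"]) auto
  qed (auto simp: s0 algebra_simps)
qed

context lmod begin

lemma msum_remove1_map:
  "x \<in> set ys \<Longrightarrow> \<forall>y\<in>set ys. f y \<in> carrier M \<Longrightarrow> msum M (map f ys) = add M (f x) (msum M (map f (remove1 x ys)))"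
proof (induction ys)
  case Nil then show ?case by simp
next
  case (Cons y ys)
  show ?case
  proof (cases "x = y")
    case True then show ?thesis by simp
  next
    case False
    then have xs: "x \<in> set ys" using Cons by simp
    then have "msum M (map f ys) = add M (f x) (msum M (map f (remove1 x ys)))" using Cons by simp
    moreover have R: "msum M (map f (remove1 x ys)) \<in> carrier M" using Cons(3)
      by (intro msum_map_closed) (meson in_mono list.set_intros(2) set_remove1_subset)
    moreover have "f x \<in> carrier M" "f y \<in> carrier M" using Cons(3) xs by auto
    ultimately have "add M (f y) (msum M (map f ys)) = add M (f x) (add M (f y) (msum M (map f (remove1 x ys))))"
      by (metis add_assoc add_comm)
    then show ?thesis using False by simp
  qed
qed

lemma msum_perm_map: "distinct xs \<Longrightarrow> distinct ys \<Longrightarrow> set xs = set ys \<Longrightarrow> \<forall>y\<in>set xs. f y \<in> carrier M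
   \<Longrightarrow> msum M (map f xs) = msum M (map f ys)"
proof (induction xs arbitrary: ys)
  case Nil then have "ys = []" by simp
  then show ?case by simp
next
  case (Cons x xs)
  have xy: "x \<in> set ys" using Cons(4) by auto
  have "set xs = set (remove1 x ys)" using Cons(2,3,4) by (auto simp: set_remove1_eq)
  moreover have "distinct (remove1 x ys)" using Cons(3) by simp
  moreover have "distinct xs" using Cons(2) by simp
  moreover have "\<forall>y\<in>set xs. f y \<in> carrier M" using Cons(5) by simp
  ultimately have "msum M (map f xs) = msum M (map f (remove1 x ys))" using Cons.IH by blast
  moreover have "\<forall>y\<in>set ys. f y \<in> carrier M" using Cons(4,5) by simp
  ultimately show ?case using msum_remove1_map[OF xy] by simp
qed

lemma fsum_any:
  assumes fin: "finite (supp f)" and sL: "supp f \<subseteq> set L" and Lc: "set L \<subseteq> carrier M" and dL: "distinct L"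
  shows "fsum M f = msum M (map (\<lambda>m. smult M (f m) m) L)"
proof -
  have ex: "\<exists>xs. distinct xs \<and> set xs = supp f" using finite_distinct_list[OF fin] by blast
  define L0 where "L0 = (SOME xs. distinct xs \<and> set xs = supp f)"
  have L0: "distinct L0" "set L0 = supp f" using someI_ex[OF ex] unfolding L0_def by blast+
  let ?t = "\<lambda>m. smult M (f m) m"
  have "msum M (map ?t L) = msum M (map ?t (filter (\<lambda>m. f m \<noteq> 0) L))"
    using Lc by (intro msum_filter) auto
  also have "\<dots> = msum M (map ?t L0)"
  proof (rule msum_perm_map)
    show "distinct (filter (\<lambda>m. f m \<noteq> 0) L)" using dL by simp
    show "distinct L0" by fact
    show "set (filter (\<lambda>m. f m \<noteq> 0) L) = set L0" using L0(2) sL by (auto simp: supp_def)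
    show "\<forall>y\<in>set (filter (\<lambda>m. f m \<noteq> 0) L). ?t y \<in> carrier M" using Lc by auto
  qed
  finally show ?thesis unfolding fsum_def L0_def by simp
qed

lemma fsum_closed: "finite (supp f) \<Longrightarrow> supp f \<subseteq> carrier M \<Longrightarrow> fsum M f \<in> carrier M"
proof -
  assume fin: "finite (supp f)" and c: "supp f \<subseteq> carrier M"
  obtain L where L: "distinct L" "set L = supp f" using finite_distinct_list[OF fin] by blast
  have "fsum M f = msum M (map (\<lambda>m. smult M (f m) m) L)" using fsum_any[OF fin _ _ L(1)] L c by auto
  moreover have "msum M (map (\<lambda>m. smult M (f m) m) L) \<in> carrier M"
    by (rule msum_map_closed) (use L c in auto)
  ultimately show ?thesis by simp
qed

lemma freeM_supp: "f \<in> carrier (freeM M) \<Longrightarrow> finite (supp f) \<and> supp f \<subseteq> carrier M"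
  by (auto simp: supp_def)

lemma is_lmodule_copyM: "is_lmodule (copyM M)"
proof -
  show ?thesis unfolding is_lmodule_def copyM_simps
  proof (intro conjI ballI allI)
    fix x y z assume "x \<in> iota ` carrier M" "y \<in> iota ` carrier M" "z \<in> iota ` carrier M"
    then obtain x' y' z' where "x = iota x'" "y = iota y'" "z = iota z'" "x' \<in> carrier M" "y' \<in> carrier M" "z' \<in> carrier M" by blast
    then show "iota (add M (inv iota (iota (add M (inv iota x) (inv iota y)))) (inv iota z)) =
       iota (add M (inv iota x) (inv iota (iota (add M (inv iota y) (inv iota z)))))"
      by (simp add: add_assoc)
  next
    fix x y assume "x \<in> iota ` carrier M" "y \<in> iota ` carrier M"
    then obtain x' y' where "x = iota x'" "y = iota y'" "x' \<in> carrier M" "y' \<in> carrier M" by blast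
    then show "iota (add M (inv iota x) (inv iota y)) = iota (add M (inv iota y) (inv iota x))"
      using add_comm by simp
    show "iota (add M (inv iota x) (inv iota y)) \<in> iota ` carrier M"
      using \<open>x = iota x'\<close> \<open>y = iota y'\<close> \<open>x' \<in> carrier M\<close> \<open>y' \<in> carrier M\<close> by simp
    fix r
    show "iota (smult M r (inv iota (iota (add M (inv iota x) (inv iota y))))) =
       iota (add M (inv iota (iota (smult M r (inv iota x)))) (inv iota (iota (smult M r (inv iota y)))))"
      using \<open>x = iota x'\<close> \<open>y = iota y'\<close> \<open>x' \<in> carrier M\<close> \<open>y' \<in> carrier M\<close> by (simp add: smult_add_r)
  next
    fix x assume "x \<in> iota ` carrier M"
    then obtain x' where x: "x = iota x'" "x' \<in> carrier M" by blast
    then show "iota (add M (inv iota (iota (zero M))) (inv iota x)) = x" by simp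
    show "\<exists>y\<in>iota ` carrier M. iota (add M (inv iota x) (inv iota y)) = iota (zero M)"
    proof -
      obtain y' where "y' \<in> carrier M" "add M x' y' = zero M" using add_inv x(2) by blast
      then show ?thesis using x by (intro bexI[of _ "iota y'"]) auto
    qed
    fix r s
    show "iota (smult M r (inv iota x)) \<in> iota ` carrier M" using x by simp
    show "iota (smult M (r + s) (inv iota x)) =
       iota (add M (inv iota (iota (smult M r (inv iota x)))) (inv iota (iota (smult M s (inv iota x)))))"
      using x by (simp add: smult_add_l)
    show "iota (smult M (r * s) (inv iota x)) = iota (smult M r (inv iota (iota (smult M s (inv iota x)))))"
      using x by (simp add: smult_mult)
    show "iota (smult M 1 (inv iota x)) = x" using x by simp
  qed simp
qed

lemma hom_iota: "module_hom M (copyM M) iota"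
  unfolding module_hom_def by simp

lemma fsum_add:
  assumes f: "f \<in> carrier (freeM M)" and g: "g \<in> carrier (freeM M)"
  shows "fsum M (\<lambda>m. f m + g m) = add M (fsum M f) (fsum M g)"
proof -
  have ff: "finite (supp f)" "supp f \<subseteq> carrier M" using freeM_supp[OF f] by auto
  have gg: "finite (supp g)" "supp g \<subseteq> carrier M" using freeM_supp[OF g] by auto
  have su: "supp (\<lambda>m. f m + g m) \<subseteq> supp f \<union> supp g" by (auto simp: supp_def)
  obtain L where L: "distinct L" "set L = supp f \<union> supp g" using finite_distinct_list ff gg
    by (metis finite_UnI)
  have Lc: "set L \<subseteq> carrier M" using L ff gg by auto
  have "fsum M (\<lambda>m. f m + g m) = msum M (map (\<lambda>m. smult M (f m + g m) m) L)"
    using fsum_any[OF finite_subset[OF su] _ Lc L(1)] su L ff gg by auto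
  also have "\<dots> = msum M (map (\<lambda>m. add M (smult M (f m) m) (smult M (g m) m)) L)"
    using Lc by (intro arg_cong[where f="msum M"] map_cong) (auto simp: smult_add_l)
  also have "\<dots> = add M (msum M (map (\<lambda>m. smult M (f m) m) L)) (msum M (map (\<lambda>m. smult M (g m) m) L))"
    using Lc by (intro msum_map_add) auto
  also have "\<dots> = add M (fsum M f) (fsum M g)"
    using fsum_any[OF ff(1) _ Lc L(1)] fsum_any[OF gg(1) _ Lc L(1)] L by auto
  finally show ?thesis .
qed

lemma fsum_smult:
  assumes f: "f \<in> carrier (freeM M)"
  shows "fsum M (\<lambda>m. r * f m) = smult M r (fsum M f)"
proof -
  have ff: "finite (supp f)" "supp f \<subseteq> carrier M" using freeM_supp[OF f] by auto
  have su: "supp (\<lambda>m. r * f m) \<subseteq> supp f" by (auto simp: supp_def)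
  obtain L where L: "distinct L" "set L = supp f" using finite_distinct_list ff by blast
  have Lc: "set L \<subseteq> carrier M" using L ff by auto
  have "fsum M (\<lambda>m. r * f m) = msum M (map (\<lambda>m. smult M (r * f m) m) L)"
    using fsum_any[OF finite_subset[OF su ff(1)] _ Lc L(1)] su L by auto
  also have "\<dots> = msum M (map (\<lambda>m. smult M r (smult M (f m) m)) L)"
    using Lc by (intro arg_cong[where f="msum M"] map_cong) (auto simp: smult_mult)
  also have "\<dots> = smult M r (msum M (map (\<lambda>m. smult M (f m) m) L))"
    using Lc by (intro msum_map_smult) auto
  also have "\<dots> = smult M r (fsum M f)"
    using fsum_any[OF ff(1) _ Lc L(1)] L by auto
  finally show ?thesis .
qed

lemma fsum_iota: "x \<in> carrier M \<Longrightarrow> fsum M (iota x) = x"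
proof -
  assume x: "x \<in> carrier M"
  have s: "supp (iota x :: 'm \<Rightarrow> 'r) = {x}" by (auto simp: supp_def iota_def)
  have "fsum M (iota x) = msum M (map (\<lambda>m. smult M (iota x m) m) [x])"
    using fsum_any[of "iota x" "[x]"] s x by simp
  then show ?thesis using x by (simp add: iota_def)
qed

lemma hom_gmap: "module_hom (freeM M) (copyM M) (gmap M)"
  unfolding module_hom_def
proof (intro conjI ballI allI)
  fix f assume f: "f \<in> carrier (freeM M)"
  show "gmap M f \<in> carrier (copyM M)" using freeM_supp[OF f] fsum_closed by (simp add: gmap_def)
  fix g assume g: "g \<in> carrier (freeM M)"
  show "gmap M (add (freeM M) f g) = add (copyM M) (gmap M f) (gmap M g)"
    using fsum_add[OF f g] by (simp add: gmap_def)
next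
  fix r f assume f: "f \<in> carrier (freeM M)"
  show "gmap M (smult (freeM M) r f) = smult (copyM M) r (gmap M f)"
    using fsum_smult[OF f] by (simp add: gmap_def)
qed

lemma surj_gmap: "gmap M ` carrier (freeM M) = carrier (copyM M)"
proof
  show "gmap M ` carrier (freeM M) \<subseteq> carrier (copyM M)"
    using hom_gmap unfolding module_hom_def by blast
  show "carrier (copyM M) \<subseteq> gmap M ` carrier (freeM M)"
  proof
    fix y assume "y \<in> carrier (copyM M)"
    then obtain x where x: "x \<in> carrier M" "y = iota x" by auto
    have s: "supp (iota x :: 'm \<Rightarrow> 'r) = {x}" by (auto simp: supp_def iota_def)
    have "iota x \<in> carrier (freeM M)" using s x by (auto simp: iota_def)
    moreover have "gmap M (iota x) = y" using fsum_iota[OF x(1)] x by (simp add: gmap_def)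
    ultimately show "y \<in> gmap M ` carrier (freeM M)" by blast
  qed
qed

end

lemma hulls:
  fixes M :: "('r::ring_1, 'm) lmodule"
  shows "co_prime_hull M {zero M} = beta_co M" "prime_hull M {zero M} = beta M"
proof -
  have eq1: "{P. completely_prime_submodule M P \<and> {zero M} \<subseteq> P} = {P. completely_prime_submodule M P}"
    by (auto simp: completely_prime_submodule_def submodule_def)
  show "co_prime_hull M {zero M} = beta_co M" unfolding co_prime_hull_def beta_co_def eq1 by (rule refl)
  have eq2: "{P. prime_submodule M P \<and> {zero M} \<subseteq> P} = {P. prime_submodule M P}"
    by (auto simp: prime_submodule_def submodule_def)
  show "prime_hull M {zero M} = beta M" unfolding prime_hull_def beta_def eq2 by (rule refl)
qed

theorem corollary4p11:
  fixes M :: "('r::ring_1, 'm) lmodule"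
  assumes "two_primal TYPE('r)"
    and "projective M"
  shows "strongly_nilpotent_elems M = gen_submodule M (E_M M {zero M})
       \<and> gen_submodule M (E_M M {zero M}) = beta_co M
       \<and> beta_co M = beta M
       \<and> complete_radical_formula M {zero M}
       \<and> radical_formula M {zero M}"
proof -
  note tp = assms(1) and pr = assms(2)
  have ism: "is_lmodule M" using pr by (simp add: projective_def)
  interpret lmod M by (rule lmod.intro[OF ism])
  have "\<exists>h. module_hom M (freeM M) h \<and> (\<forall>x\<in>carrier M. gmap M (h x) = iota x)"
    using pr is_lmodule_freeM[of M] is_lmodule_copyM hom_gmap surj_gmap hom_iota
    unfolding projective_def by blast
  then obtain h where hh: "module_hom M (freeM M) h" and hg: "\<forall>x\<in>carrier M. gmap M (h x) = iota x"
    by blast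
  have hc: "h x \<in> carrier (freeM M)" if "x \<in> carrier M" for x
    using hh that unfolding module_hom_def by blast
  have hfs: "fsum M (h x) = x" if "x \<in> carrier M" for x
  proof -
    have "(iota (fsum M (h x)) :: 'm \<Rightarrow> 'r) = iota x" using hg that by (simp add: gmap_def)
    then show ?thesis by (rule injD[OF inj_iota])
  qed
  have h_add: "h (add M x y) = (\<lambda>m. h x m + h y m)" if "x \<in> carrier M" "y \<in> carrier M" for x y
    using hh that unfolding module_hom_def by simp
  have h_smult: "h (smult M r x) = (\<lambda>m. r * h x m)" if "x \<in> carrier M" for x r
    using hh that unfolding module_hom_def by simp
  have h_zero: "h (zero M) m = 0" for m
  proof -
    have e: "h (add M (zero M) (zero M)) = (\<lambda>m. h (zero M) m + h (zero M) m)" by (rule h_add) simp_all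
    then have "h (zero M) = (\<lambda>m. h (zero M) m + h (zero M) m)" by simp
    then have "h (zero M) m = h (zero M) m + h (zero M) m" by (metis)
    then show ?thesis by simp
  qed
  have rep: "\<exists>L. distinct L \<and> set L = supp (h x) \<and> set L \<subseteq> carrier M \<and>
      x = msum M (map (\<lambda>m. smult M (h x m) m) L)" if x: "x \<in> carrier M" for x
  proof -
    have fs: "finite (supp (h x))" "supp (h x) \<subseteq> carrier M" using freeM_supp[OF hc[OF x]] by auto
    obtain L where L: "distinct L" "set L = supp (h x)" using finite_distinct_list[OF fs(1)] by blast
    have "fsum M (h x) = msum M (map (\<lambda>m. smult M (h x m) m) L)"
      using fsum_any[OF fs(1) _ _ L(1)] L fs by auto
    then show ?thesis using hfs[OF x] L fs by auto
  qed
  define Z where "Z = {x\<in>carrier M. \<forall>m. h x m \<in> nilpotent_elems}"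
  define N0 where "N0 = gen_submodule M (E_M M {zero M})"
  have subN0: "submodule M N0" unfolding N0_def using gen_sub E_carrier by blast
  have EN0: "E_M M {zero M} \<subseteq> N0" unfolding N0_def gen_submodule_def by blast
  have ZN0: "Z \<subseteq> N0"
  proof
    fix x assume "x \<in> Z"
    then have x: "x \<in> carrier M" and nil: "\<forall>m. h x m \<in> nilpotent_elems" by (auto simp: Z_def)
    obtain L where L: "distinct L" "set L \<subseteq> carrier M" "x = msum M (map (\<lambda>m. smult M (h x m) m) L)"
      using rep[OF x] by blast
    have "set (map (\<lambda>m. smult M (h x m) m) L) \<subseteq> N0"
    proof
      fix y assume "y \<in> set (map (\<lambda>m. smult M (h x m) m) L)"
      then obtain m where m: "m \<in> set L" "y = smult M (h x m) m" by auto
      obtain k where "(h x m) ^ k = 0" using nil unfolding nilpotent_elems_def by blast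
      then have "smult M ((h x m) ^ k) m \<in> {zero M}" using L(2) m by auto
      then have "y \<in> E_M M {zero M}" unfolding E_M_def using m L(2) by blast
      then show "y \<in> N0" using EN0 by blast
    qed
    then have "msum M (map (\<lambda>m. smult M (h x m) m) L) \<in> N0" by (rule submodule_msum[OF subN0])
    then show "x \<in> N0" using L(3) by simp
  qed
  have ZNs: "Z \<subseteq> strongly_nilpotent_elems M"
  proof
    fix x assume "x \<in> Z"
    then have x: "x \<in> carrier M" and nil: "\<forall>m. h x m \<in> nilpotent_elems" by (auto simp: Z_def)
    obtain L where L: "distinct L" "set L \<subseteq> carrier M" "x = msum M (map (\<lambda>m. smult M (h x m) m) L)"
      using rep[OF x] by blast
    define ps where "ps = map (\<lambda>m. (h x m, m)) L"
    have p1: "\<forall>(a, m) \<in> set ps. m \<in> carrier M" using L(2) by (auto simp: ps_def)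
    have p2: "x = msum M (map (\<lambda>(a, m). smult M a m) ps)" using L(3) by (simp add: ps_def o_def)
    have p3: "\<forall>p \<in> set ps. \<forall>s :: nat \<Rightarrow> 'r.
           s 0 = fst p \<longrightarrow> (\<forall>n. \<exists>t. s (Suc n) = s n * t * s n) \<longrightarrow>
           (\<exists>k. \<forall>t. smult M (s k * t) (snd p) = zero M)"
    proof (intro ballI allI impI)
      fix p s assume p: "p \<in> set ps" and ps: "s 0 = fst p" and rec: "\<forall>n. \<exists>t. s (Suc n) = s n * t * s n"
      obtain m where m: "m \<in> set L" "p = (h x m, m)" using p by (auto simp: ps_def)
      have "s 0 \<in> nilpotent_elems" using ps m nil by simp
      then obtain k where "s k = 0" using nil_strongly[OF tp _ rec] by blast
      moreover have "m \<in> carrier M" using m L(2) by blast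
      ultimately have "\<forall>t. smult M (s k * t) m = zero M" by simp
      then show "\<exists>k. \<forall>t. smult M (s k * t) (snd p) = zero M" using m by auto
    qed
    have p3': "\<forall>(a, m) \<in> set ps. \<forall>s :: nat \<Rightarrow> 'r.
           s 0 = a \<longrightarrow> (\<forall>n. \<exists>t. s (Suc n) = s n * t * s n) \<longrightarrow>
           (\<exists>k. \<forall>t. smult M (s k * t) m = zero M)"
      using p3 by (simp add: case_prod_beta)
    show "x \<in> strongly_nilpotent_elems M"
      unfolding strongly_nilpotent_elems_def using p1 p2 p3' by blast
  qed
  have BZ: "beta_co M \<subseteq> Z"
  proof
    fix x assume xb: "x \<in> beta_co M"
    have xc: "x \<in> carrier M"
    proof (cases "{P. completely_prime_submodule M P} = {}")
      case True then show ?thesis using xb by (simp add: beta_co_def)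
    next
      case False
      then obtain P where "completely_prime_submodule M P" by blast
      then have "P \<subseteq> carrier M" by (simp add: completely_prime_submodule_def submodule_def)
      moreover have "beta_co M = \<Inter>{P. completely_prime_submodule M P}"
        unfolding beta_co_def using False by (rule if_not_P)
      then have "x \<in> P" using xb \<open>completely_prime_submodule M P\<close> by blast
      ultimately show ?thesis by blast
    qed
    show "x \<in> Z"
    proof (rule ccontr)
      assume "x \<notin> Z"
      then obtain m0 where m0: "h x m0 \<notin> nilpotent_elems" using xc by (auto simp: Z_def)
      obtain Q where IQ: "ring_ideal Q" and cQ: "h x m0 \<notin> Q" and cp: "\<forall>a b. a*b \<in> Q \<longrightarrow> a \<in> Q \<or> b \<in> Q"
        using exists_cp_ideal[OF tp m0] by blast
      define P where "P = {y\<in>carrier M. \<forall>m. h y m \<in> Q}"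
      have SP: "submodule M P" unfolding submodule_def
      proof (intro conjI ballI allI)
        show "P \<subseteq> carrier M" unfolding P_def by blast
        show "zero M \<in> P" unfolding P_def using h_zero ideal_zero[OF IQ] by simp
      next
        fix y z assume "y \<in> P" "z \<in> P"
        then show "add M y z \<in> P" unfolding P_def using h_add ideal_add[OF IQ] by simp
      next
        fix r y assume "y \<in> P"
        then show "smult M r y \<in> P" unfolding P_def using h_smult ideal_lmult[OF IQ] by simp
      qed
      have xP: "x \<notin> P" unfolding P_def using cQ by blast
      have "completely_prime_submodule M P" unfolding completely_prime_submodule_def
      proof (intro conjI)
        show "submodule M P" by fact
        show "\<not> (\<forall>r. \<forall>m\<in>carrier M. smult M r m \<in> P)" using xP xc smult_one[OF xc] by metis
        show "\<forall>r. \<forall>m\<in>carrier M. smult M r m \<in> P \<longrightarrow> m \<in> P \<or> (\<forall>m'\<in>carrier M. smult M r m' \<in> P)"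
        proof (intro allI ballI impI)
          fix r y assume y: "y \<in> carrier M" and ry: "smult M r y \<in> P"
          then have ryQ: "\<forall>m. r * h y m \<in> Q" unfolding P_def using h_smult by simp
          show "y \<in> P \<or> (\<forall>m'\<in>carrier M. smult M r m' \<in> P)"
          proof (cases "r \<in> Q")
            case True
            have "smult M r m' \<in> P" if "m' \<in> carrier M" for m'
              unfolding P_def using that h_smult ideal_rmult[OF IQ True] by simp
            then show ?thesis by blast
          next
            case False
            then have "\<forall>m. h y m \<in> Q" using ryQ cp by blast
            then show ?thesis unfolding P_def using y by blast
          qed
        qed
      qed
      then have "beta_co M \<subseteq> P" unfolding beta_co_def by auto
      then show False using xb xP by blast
    qed
  qed
  have a: "strongly_nilpotent_elems M \<subseteq> beta M" by (rule Ns_sub)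
  have b: "beta M \<subseteq> beta_co M" by (rule beta_sub)
  have f: "N0 \<subseteq> beta_co M" unfolding N0_def by (rule N0_sub)
  have e1: "strongly_nilpotent_elems M = N0" using a b BZ ZN0 f ZNs by blast
  have e2: "N0 = beta_co M" using f BZ ZN0 by blast
  have e3: "beta_co M = beta M" using a b BZ ZNs by blast
  show ?thesis using e1 e2 e3 hulls[of M]
    unfolding complete_radical_formula_def radical_formula_def N0_def by simp
qed

end
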